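(* Let $q=q_n$ be the transpose top with random measure on $S_n$, $u=u_n$ the uniform measure on $S_n$, and $h_t=h_{q,t}$ the associated continuous time law. For any sequence of nonnegative reals $(k_n)$ such that $(k_n-n\log n)/n\to-\infty$ as $n\to\infty$, we have $d_2(h_{k_n},u)\to\infty$ and $\|h_{k_n}-u\|_{TV}\to 1$.
   Context: The transpose top with random measure on $S_n$ is $q(\tau)=1/n$ if $\tau=(1,j)$, $1\le j\le n$ (with $(1,1)=e$), and $0$ otherwise. $q^{(k)}$ is the $k$-fold convolution power and $h_{q,t}=e^{-t}\sum_{k\ge0}\frac{t^k}{k!}q^{(k)}$. $d_2(p,u)=\big(|G|\sum_{x\in G}|p(x)-u(x)|^2\big)^{1/2}$ and $\|p-u\|_{TV}=\sup_{A\subset G}(p(A)-u(A))$. *)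

theory Defs
  imports "HOL-Analysis.Analysis" "HOL-Combinatorics.Combinatorics"
begin

definition Sym :: "nat \<Rightarrow> (nat \<Rightarrow> nat) set" where
  "Sym n = {p. p permutes {1..n}}"

definition ttr :: "nat \<Rightarrow> (nat \<Rightarrow> nat) \<Rightarrow> real" where
  "ttr n \<tau> = (if \<exists>j\<in>{1..n}. \<tau> = Transposition.transpose 1 j then 1 / real n else 0)"

definition unif :: "nat \<Rightarrow> (nat \<Rightarrow> nat) \<Rightarrow> real" where
  "unif n x = (if x \<in> Sym n then 1 / real (card (Sym n)) else 0)"

definition conv :: "nat \<Rightarrow> ((nat \<Rightarrow> nat) \<Rightarrow> real) \<Rightarrow> ((nat \<Rightarrow> nat) \<Rightarrow> real) \<Rightarrow> (nat \<Rightarrow> nat) \<Rightarrow> real" where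
  "conv n p r x = (\<Sum>y\<in>Sym n. p y * r (inv y \<circ> x))"

fun conv_pow :: "nat \<Rightarrow> ((nat \<Rightarrow> nat) \<Rightarrow> real) \<Rightarrow> nat \<Rightarrow> (nat \<Rightarrow> nat) \<Rightarrow> real" where
  "conv_pow n p 0 = (\<lambda>x. if x = id then 1 else 0)"
| "conv_pow n p (Suc k) = conv n (conv_pow n p k) p"

definition heat :: "nat \<Rightarrow> ((nat \<Rightarrow> nat) \<Rightarrow> real) \<Rightarrow> real \<Rightarrow> (nat \<Rightarrow> nat) \<Rightarrow> real" where
  "heat n p t x = exp (- t) * (\<Sum>k. t ^ k / fact k * conv_pow n p k x)"

definition d2 :: "nat \<Rightarrow> ((nat \<Rightarrow> nat) \<Rightarrow> real) \<Rightarrow> ((nat \<Rightarrow> nat) \<Rightarrow> real) \<Rightarrow> real" where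
  "d2 n p u = sqrt (real (card (Sym n)) * (\<Sum>x\<in>Sym n. \<bar>p x - u x\<bar> ^ 2))"

definition tv :: "nat \<Rightarrow> ((nat \<Rightarrow> nat) \<Rightarrow> real) \<Rightarrow> ((nat \<Rightarrow> nat) \<Rightarrow> real) \<Rightarrow> real" where
  "tv n p u = (SUP A\<in>Pow (Sym n). (\<Sum>x\<in>A. p x) - (\<Sum>x\<in>A. u x))"

end

theory Submission
  imports Defs
begin


definition prodl :: "nat list \<Rightarrow> nat \<Rightarrow> nat" where
  "prodl js = foldl (\<lambda>\<sigma> j. \<sigma> \<circ> Transposition.transpose 1 j) id js"

definition Ls :: "nat \<Rightarrow> nat \<Rightarrow> nat list set" where
  "Ls n k = {js. set js \<subseteq> {1..n} \<and> length js = k}"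

lemma prodl_snoc[simp]: "prodl (js @ [j]) = prodl js \<circ> Transposition.transpose 1 j"
  by (simp add: prodl_def)

lemma prodl_Nil[simp]: "prodl [] = id" by (simp add: prodl_def)

lemma prodl_permutes: "set js \<subseteq> {1..n} \<Longrightarrow> 1 \<le> n \<Longrightarrow> prodl js permutes {1..n}"
proof (induction js rule: rev_induct)
  case Nil then show ?case by (simp only: prodl_Nil permutes_id)
next
  case (snoc j js)
  then have "Transposition.transpose 1 j permutes {1..n}" by (intro permutes_swap_id) auto
  moreover have "prodl js permutes {1..n}" using snoc by auto
  ultimately show ?case by (simp only: prodl_snoc permutes_compose)
qed

lemma prodl_fix: "j \<notin> set js \<Longrightarrow> j \<noteq> 1 \<Longrightarrow> prodl js j = j"
  by (induction js rule: rev_induct) (auto simp: transpose_def)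

lemma finite_Ls[simp]: "finite (Ls n k)"
  unfolding Ls_def by (rule finite_lists_length_eq) auto

lemma card_Ls: "card (Ls n k) = n ^ k"
  unfolding Ls_def by (simp add: card_lists_length_eq)

lemma Ls_Suc: "Ls n (Suc k) = (\<lambda>(xs,j). xs @ [j]) ` (Ls n k \<times> {1..n})"
proof
  show "Ls n (Suc k) \<subseteq> (\<lambda>(xs,j). xs @ [j]) ` (Ls n k \<times> {1..n})"
  proof
    fix xs assume xs: "xs \<in> Ls n (Suc k)"
    then have ne: "xs \<noteq> []" by (auto simp: Ls_def)
    have "xs = butlast xs @ [last xs]" using ne by simp
    moreover have "butlast xs \<in> Ls n k" using xs ne
      by (auto simp: Ls_def dest: in_set_butlastD)
    moreover have "last xs \<in> {1..n}" using xs last_in_set[OF ne] unfolding Ls_def by blast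
    ultimately show "xs \<in> (\<lambda>(xs,j). xs @ [j]) ` (Ls n k \<times> {1..n})"
      by (metis (no_types, lifting) SigmaI case_prod_conv image_eqI)
  qed
qed (auto simp: Ls_def)

lemma sum_Ls_Suc: "(\<Sum>xs\<in>Ls n (Suc k). f xs) = (\<Sum>js\<in>Ls n k. \<Sum>j\<in>{1..n}. f (js @ [j]))"
proof -
  have inj: "inj_on (\<lambda>(xs,j). xs @ [j]) (Ls n k \<times> {1..n})"
    by (auto simp: inj_on_def)
  show ?thesis
    unfolding Ls_Suc sum.reindex[OF inj] sum.cartesian_product by (simp add: case_prod_unfold)
qed

lemma transpose_1_inj: "Transposition.transpose 1 j = Transposition.transpose 1 j' \<Longrightarrow> j = j'"
proof -
  assume "Transposition.transpose 1 j = Transposition.transpose 1 j'"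
  then have "Transposition.transpose 1 j 1 = Transposition.transpose 1 j' 1" by simp
  then show ?thesis by simp
qed

lemma ttr_inv:
  assumes "\<sigma> permutes {1..n}"
  shows "ttr n (inv \<sigma> \<circ> x) = (1 / real n) * (\<Sum>j\<in>{1..n}. if \<sigma> \<circ> Transposition.transpose 1 j = x then 1 else 0)"
proof -
  have eq: "\<sigma> \<circ> Transposition.transpose 1 j = x \<longleftrightarrow> Transposition.transpose 1 j = inv \<sigma> \<circ> x" for j
  proof
    assume h: "\<sigma> \<circ> Transposition.transpose 1 j = x"
    have "inv \<sigma> \<circ> x = (inv \<sigma> \<circ> \<sigma>) \<circ> Transposition.transpose 1 j"
      unfolding h[symmetric] by (rule o_assoc)
    then show "Transposition.transpose 1 j = inv \<sigma> \<circ> x"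
      by (simp add: permutes_inv_o[OF assms])
  next
    assume "Transposition.transpose 1 j = inv \<sigma> \<circ> x"
    then show "\<sigma> \<circ> Transposition.transpose 1 j = x"
      by (auto simp: fun_eq_iff permutes_inverses[OF assms])
  qed
  show ?thesis
  proof (cases "\<exists>j\<in>{1..n}. inv \<sigma> \<circ> x = Transposition.transpose 1 j")
    case True
    then obtain j0 where j0: "j0 \<in> {1..n}" "inv \<sigma> \<circ> x = Transposition.transpose 1 j0" by blast
    have "(\<Sum>j\<in>{1..n}. if \<sigma> \<circ> Transposition.transpose 1 j = x then 1 else 0 :: real)
        = (\<Sum>j\<in>{1..n}. if j = j0 then 1 else 0)"
    proof (rule sum.cong[OF refl])
      fix j
      have "\<sigma> \<circ> Transposition.transpose 1 j = x \<longleftrightarrow> j = j0"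
        unfolding eq j0(2) using transpose_1_inj by blast
      then show "(if \<sigma> \<circ> Transposition.transpose 1 j = x then 1 else 0 :: real) = (if j = j0 then 1 else 0)"
        by simp
    qed
    also have "\<dots> = 1" using j0 by simp
    finally show ?thesis using True by (simp add: ttr_def)
  next
    case False
    have "(\<Sum>j\<in>{1..n}. if \<sigma> \<circ> Transposition.transpose 1 j = x then 1 else 0 :: real) = 0"
    proof (rule sum.neutral, rule ballI)
      fix j assume "j \<in> {1..n}"
      then have "\<not> (\<sigma> \<circ> Transposition.transpose 1 j = x)"
        unfolding eq using False by metis
      then show "(if \<sigma> \<circ> Transposition.transpose 1 j = x then 1 else 0 :: real) = 0" by simp
    qed
    then show ?thesis using False by (simp add: ttr_def)
  qed
qed

lemma finite_Sym[simp]: "finite (Sym n)"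
  by (simp add: Sym_def finite_permutations)

lemma prodl_Sym: "js \<in> Ls n k \<Longrightarrow> 1 \<le> n \<Longrightarrow> prodl js \<in> Sym n"
  using prodl_permutes by (auto simp: Sym_def Ls_def)

lemma conv_pow_Ls:
  assumes "1 \<le> n"
  shows "conv_pow n (ttr n) k x = (1 / real n) ^ k * (\<Sum>js\<in>Ls n k. if prodl js = x then 1 else 0)"
proof (induction k arbitrary: x)
  case 0
  have L0: "Ls n 0 = {[]}" unfolding Ls_def by auto
  have e: "(prodl [] = x) = (x = id)" by auto
  show ?case unfolding L0 by (simp del: prodl_Nil add: e)
next
  case (Suc k)
  define c where "c = (1 / real n) ^ k"
  have "conv_pow n (ttr n) (Suc k) x = (\<Sum>y\<in>Sym n. conv_pow n (ttr n) k y * ttr n (inv y \<circ> x))"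
    by (simp add: conv_def)
  also have "\<dots> = (\<Sum>y\<in>Sym n. c * (\<Sum>js\<in>Ls n k. (if prodl js = y then 1 else 0) * ttr n (inv y \<circ> x)))"
    unfolding Suc c_def by (simp only: sum_distrib_right mult.assoc)
  also have "\<dots> = c * (\<Sum>js\<in>Ls n k. \<Sum>y\<in>Sym n. (if prodl js = y then 1 else 0) * ttr n (inv y \<circ> x))"
    unfolding sum_distrib_left[symmetric] by (rule arg_cong[where f="(*) c"], rule sum.swap)
  also have "\<dots> = c * (\<Sum>js\<in>Ls n k. ttr n (inv (prodl js) \<circ> x))"
  proof -
    have "(\<Sum>y\<in>Sym n. (if prodl js = y then 1 else 0) * ttr n (inv y \<circ> x)) = ttr n (inv (prodl js) \<circ> x)"
      if "js \<in> Ls n k" for js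
    proof -
      have "(\<Sum>y\<in>Sym n. (if prodl js = y then 1 else 0) * ttr n (inv y \<circ> x))
          = (\<Sum>y\<in>Sym n. if prodl js = y then ttr n (inv y \<circ> x) else 0)"
        by (rule sum.cong) auto
      also have "\<dots> = ttr n (inv (prodl js) \<circ> x)"
        using prodl_Sym[OF that assms] by (simp add: sum.delta)
      finally show ?thesis .
    qed
    then show ?thesis by simp
  qed
  also have "\<dots> = c * (\<Sum>js\<in>Ls n k. (1 / real n) * (\<Sum>j\<in>{1..n}. if prodl (js @ [j]) = x then 1 else 0))"
  proof -
    have "ttr n (inv (prodl js) \<circ> x) = (1 / real n) * (\<Sum>j\<in>{1..n}. if prodl (js @ [j]) = x then 1 else 0)"
      if "js \<in> Ls n k" for js
    proof -
      have "prodl js permutes {1..n}" using prodl_Sym[OF that assms] by (simp add: Sym_def)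
      from ttr_inv[OF this, of x] show ?thesis by (simp only: prodl_snoc)
    qed
    then show ?thesis by simp
  qed
  also have "\<dots> = (1 / real n) ^ Suc k * (\<Sum>js\<in>Ls n (Suc k). if prodl js = x then 1 else 0)"
    unfolding sum_Ls_Suc c_def by (simp add: sum_distrib_left mult.assoc)
  finally show ?case .
qed




lemma sum_ind: "finite A \<Longrightarrow> (\<Sum>x\<in>A. if P x then 1 else 0 :: real) = real (card {x\<in>A. P x})"
  by (simp add: sum.If_cases Int_def conj_commute)

lemma card_Ls_avoid:
  assumes "S \<subseteq> {1..n}"
  shows "card {js\<in>Ls n k. set js \<inter> S = {}} = (n - card S) ^ k"
proof -
  have "{js\<in>Ls n k. set js \<inter> S = {}} = {js. set js \<subseteq> {1..n} - S \<and> length js = k}"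
    by (auto simp: Ls_def)
  moreover have "card ({1..n} - S) = n - card S"
    using assms by (simp add: card_Diff_subset finite_subset)
  ultimately show ?thesis by (simp add: card_lists_length_eq)
qed

definition U :: "nat \<Rightarrow> nat list \<Rightarrow> real" where
  "U n js = (\<Sum>j\<in>{2..n}. if j \<in> set js then 0 else 1)"

definition G :: "nat \<Rightarrow> (nat \<Rightarrow> nat) \<Rightarrow> real" where
  "G n \<sigma> = (\<Sum>j\<in>{2..n}. if \<sigma> j = j then 1 else 0)"

lemma G_ge_U: "U n js \<le> G n (prodl js)"
  unfolding U_def G_def
  by (rule sum_mono) (auto simp: prodl_fix)

lemma sum_U: "(\<Sum>js\<in>Ls n k. U n js) = real (n - 1) * real (n - 1) ^ k"
proof -
  have "(\<Sum>js\<in>Ls n k. U n js) = (\<Sum>j\<in>{2..n}. \<Sum>js\<in>Ls n k. if set js \<inter> {j} = {} then 1 else 0)"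
    unfolding U_def by (subst sum.swap) (auto intro!: sum.cong)
  also have "\<dots> = (\<Sum>j\<in>{2..n}. real (n - 1) ^ k)"
  proof (rule sum.cong[OF refl])
    fix j assume "j \<in> {2..n}"
    then have "{j} \<subseteq> {1..n}" by auto
    from card_Ls_avoid[OF this, of k] show "(\<Sum>js\<in>Ls n k. if set js \<inter> {j} = {} then 1 else 0) = real (n - 1) ^ k"
      by (simp add: sum_ind)
  qed
  also have "\<dots> = real (n - 1) * real (n - 1) ^ k" by (cases "n \<le> 1") (auto simp: of_nat_diff)
  finally show ?thesis .
qed

lemma sum_U2:
  assumes "2 \<le> n"
  shows "(\<Sum>js\<in>Ls n k. (U n js)\<^sup>2) = real (n - 1) * real (n - 1) ^ k + real (n - 1) * real (n - 2) * real (n - 2) ^ k"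
proof -
  have sq: "(U n js)\<^sup>2 = (\<Sum>i\<in>{2..n}. \<Sum>j\<in>{2..n}. if set js \<inter> {i, j} = {} then 1 else 0)" for js
    unfolding U_def power2_eq_square sum_product by (intro sum.cong refl) auto
  have "(\<Sum>js\<in>Ls n k. (U n js)\<^sup>2) = (\<Sum>i\<in>{2..n}. \<Sum>j\<in>{2..n}. \<Sum>js\<in>Ls n k. if set js \<inter> {i, j} = {} then 1 else 0)"
    unfolding sq by (subst sum.swap, rule sum.cong[OF refl], rule sum.swap)
  also have "\<dots> = (\<Sum>i\<in>{2..n}. \<Sum>j\<in>{2..n}. real (n - card {i, j}) ^ k)"
  proof (intro sum.cong refl)
    fix i j assume "i \<in> {2..n}" "j \<in> {2..n}"
    then have "{i, j} \<subseteq> {1..n}" by auto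
    from card_Ls_avoid[OF this, of k] show "(\<Sum>js\<in>Ls n k. if set js \<inter> {i, j} = {} then 1 else 0) = real (n - card {i, j}) ^ k"
      by (simp add: sum_ind)
  qed
  also have "\<dots> = (\<Sum>i\<in>{2..n}. real (n - 1) ^ k + real (n - 2) * real (n - 2) ^ k)"
  proof (rule sum.cong[OF refl])
    fix i assume i: "i \<in> {2..n}"
    have "(\<Sum>j\<in>{2..n}. real (n - card {i, j}) ^ k) = real (n - card {i, i}) ^ k + (\<Sum>j\<in>{2..n} - {i}. real (n - card {i, j}) ^ k)"
      using i by (subst sum.remove[of _ i]) auto
    also have "(\<Sum>j\<in>{2..n} - {i}. real (n - card {i, j}) ^ k) = (\<Sum>j\<in>{2..n} - {i}. real (n - 2) ^ k)"
      by (rule sum.cong) auto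
    also have "\<dots> = real (n - 2) * real (n - 2) ^ k"
      using i by (simp add: card_Diff_singleton)
    finally show "(\<Sum>j\<in>{2..n}. real (n - card {i, j}) ^ k) = real (n - 1) ^ k + real (n - 2) * real (n - 2) ^ k"
      by simp
  qed
  also have "\<dots> = real (n - 1) * real (n - 1) ^ k + real (n - 1) * real (n - 2) * real (n - 2) ^ k"
  proof -
    have e: "real (n - 1) = real n - 1" "real (n - 2) = real n - 2" "real (n - Suc 0) = real n - 1" using assms by auto
    show ?thesis unfolding e by (simp add: e algebra_simps)
  qed
  finally show ?thesis .
qed




lemma exp_sums: "(\<lambda>k. x ^ k / fact k) sums exp (x::real)"
  using exp_converges[of x] by (simp add: divide_inverse mult.commute)

lemma summ:
  assumes "\<And>k. 0 \<le> a k" "\<And>k. a k \<le> 1"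
  shows "summable (\<lambda>k. (t::real) ^ k / fact k * a k)"
proof (rule summable_comparison_test')
  show "summable (\<lambda>k. \<bar>t\<bar> ^ k / fact k)" using exp_sums[of "\<bar>t\<bar>"] by (rule sums_summable)
  fix k :: nat
  have "norm (t ^ k / fact k * a k) = \<bar>t\<bar> ^ k / fact k * a k"
    using assms(1)[of k] by (simp add: abs_mult power_abs)
  also have "\<dots> \<le> \<bar>t\<bar> ^ k / fact k * 1"
    by (rule mult_left_mono) (use assms(2)[of k] in auto)
  finally show "norm (t ^ k / fact k * a k) \<le> \<bar>t\<bar> ^ k / fact k" by simp
qed

definition cntA :: "nat \<Rightarrow> (nat \<Rightarrow> nat) set \<Rightarrow> nat \<Rightarrow> real" where
  "cntA n A k = (\<Sum>js\<in>Ls n k. if prodl js \<in> A then 1 else 0)"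

lemma ind_sum_le: "(\<Sum>js\<in>Ls n k. if P js then 1 else 0 :: real) \<le> real n ^ k"
proof -
  have "(\<Sum>js\<in>Ls n k. if P js then 1 else 0 :: real) \<le> (\<Sum>js\<in>Ls n k. 1)"
    by (rule sum_mono) auto
  also have "\<dots> = real n ^ k" by (simp add: card_Ls)
  finally show ?thesis .
qed

lemma ind_sum_ge: "0 \<le> (\<Sum>js\<in>Ls n k. if P js then 1 else 0 :: real)"
  by (rule sum_nonneg) auto

lemma normalize_le1:
  assumes "1 \<le> n" "0 \<le> s" "s \<le> real n ^ k"
  shows "0 \<le> (1 / real n) ^ k * s" "(1 / real n) ^ k * s \<le> 1"
proof -
  show "0 \<le> (1 / real n) ^ k * s" using assms by simp
  have "(1 / real n) ^ k * s \<le> (1 / real n) ^ k * real n ^ k"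
    using assms by (intro mult_left_mono) auto
  also have "\<dots> = 1" using assms by (simp add: power_one_over[symmetric] power_mult_distrib[symmetric])
  finally show "(1 / real n) ^ k * s \<le> 1" .
qed

lemma heat_set:
  assumes n: "1 \<le> n" and A: "finite A"
  shows "(\<Sum>x\<in>A. heat n (ttr n) t x) = exp (- t) * (\<Sum>k. t ^ k / fact k * ((1 / real n) ^ k * cntA n A k))"
proof -
  have sm: "summable (\<lambda>k. t ^ k / fact k * conv_pow n (ttr n) k x)" for x
    unfolding conv_pow_Ls[OF n]
    by (rule summ; rule normalize_le1[OF n ind_sum_ge ind_sum_le])
  have "(\<Sum>x\<in>A. heat n (ttr n) t x) = exp (- t) * (\<Sum>x\<in>A. \<Sum>k. t ^ k / fact k * conv_pow n (ttr n) k x)"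
    by (simp add: heat_def sum_distrib_left)
  also have "(\<Sum>x\<in>A. \<Sum>k. t ^ k / fact k * conv_pow n (ttr n) k x) = (\<Sum>k. \<Sum>x\<in>A. t ^ k / fact k * conv_pow n (ttr n) k x)"
    by (rule suminf_sum[symmetric]) (rule sm)
  also have "\<dots> = (\<Sum>k. t ^ k / fact k * ((1 / real n) ^ k * cntA n A k))"
  proof (rule arg_cong[where f=suminf], rule ext)
    fix k
    have "(\<Sum>x\<in>A. t ^ k / fact k * conv_pow n (ttr n) k x)
       = t ^ k / fact k * ((1 / real n) ^ k * (\<Sum>x\<in>A. \<Sum>js\<in>Ls n k. if prodl js = x then 1 else 0))"
      unfolding conv_pow_Ls[OF n] by (simp add: sum_distrib_left)
    also have "(\<Sum>x\<in>A. \<Sum>js\<in>Ls n k. if prodl js = x then 1 else 0 :: real) = cntA n A k"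
      unfolding cntA_def by (subst sum.swap) (simp add: sum.delta A)
    finally show "(\<Sum>x\<in>A. t ^ k / fact k * conv_pow n (ttr n) k x) = t ^ k / fact k * ((1 / real n) ^ k * cntA n A k)" .
  qed
  finally show ?thesis .
qed

lemma ws: "(\<lambda>k. t ^ k / fact k * ((1 / real n) ^ k * b ^ k)) sums exp (t * b / real n)"
proof -
  have "(t * b / real n) ^ k / fact k = t ^ k / fact k * ((1 / real n) ^ k * b ^ k)" for k
    by (simp add: power_mult_distrib power_divide)
  then show ?thesis using exp_sums[of "t * b / real n"] by simp
qed

lemma heat_le1:
  assumes n: "1 \<le> n" and A: "finite A" and t: "0 \<le> t"
  shows "(\<Sum>x\<in>A. heat n (ttr n) t x) \<le> 1"
proof -
  have s1: "(\<lambda>k. t ^ k / fact k * ((1 / real n) ^ k * cntA n A k)) sums (\<Sum>k. t ^ k / fact k * ((1 / real n) ^ k * cntA n A k))"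
    unfolding cntA_def by (rule summable_sums, rule summ; rule normalize_le1[OF n ind_sum_ge ind_sum_le])
  have le: "t ^ k / fact k * ((1 / real n) ^ k * cntA n A k) \<le> t ^ k / fact k * ((1 / real n) ^ k * real n ^ k)" for k
    unfolding cntA_def using t by (intro mult_left_mono ind_sum_le) auto
  have "(\<Sum>k. t ^ k / fact k * ((1 / real n) ^ k * cntA n A k)) \<le> exp (t * real n / real n)"
    by (rule sums_le[OF le s1 ws])
  then have "(\<Sum>k. t ^ k / fact k * ((1 / real n) ^ k * cntA n A k)) \<le> exp t" using n by simp
  then have "exp (- t) * (\<Sum>k. t ^ k / fact k * ((1 / real n) ^ k * cntA n A k)) \<le> exp (- t) * exp t"
    by (intro mult_left_mono) auto
  then show ?thesis unfolding heat_set[OF n A] by (simp add: exp_minus)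
qed




lemma heat_A_ge:
  assumes n: "2 \<le> n" and t: "0 \<le> t" and mu: "\<mu> = real (n - 1) * exp (- t / real n)"
  shows "1 - 4 / \<mu> \<le> (\<Sum>x\<in>{\<sigma>\<in>Sym n. \<mu> / 2 \<le> G n \<sigma>}. heat n (ttr n) t x)"
proof -
  define A where "A = {\<sigma>\<in>Sym n. \<mu> / 2 \<le> G n \<sigma>}"
  define c where "c = 4 / \<mu>\<^sup>2"
  define N where "N = real n"
  define a1 where "a1 = real (n - 1)"
  define a2 where "a2 = real (n - 2)"
  define e where "e = exp (- t / N)"
  have n1: "1 \<le> n" using n by auto
  have Npos: "N > 0" using n by (simp add: N_def)
  have a1N: "a1 = N - 1" using n by (simp add: a1_def N_def)
  have a2N: "a2 = N - 2" using n by (simp add: a2_def N_def)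
  have mue: "\<mu> = a1 * e" by (simp add: mu a1_def e_def N_def)
  have epos: "e > 0" by (simp add: e_def)
  have mupos: "\<mu> > 0" using n by (simp add: mue a1N N_def epos)
  have cpos: "c > 0" using mupos by (simp add: c_def)
  have finA: "finite A" by (simp add: A_def)
  have ind: "1 - c * (U n js - \<mu>)\<^sup>2 \<le> (if prodl js \<in> A then 1 else 0)" if js: "js \<in> Ls n k" for js k
  proof (cases "\<mu> / 2 \<le> U n js")
    case True
    then have "prodl js \<in> A" using G_ge_U[of n js] prodl_Sym[OF js n1] by (auto simp: A_def)
    then show ?thesis using cpos by simp
  next
    case False
    then have "\<mu> / 2 \<le> \<mu> - U n js" by simp
    then have "(\<mu> / 2)\<^sup>2 \<le> (\<mu> - U n js)\<^sup>2" using mupos by (intro power_mono) auto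
    then have "(\<mu> / 2)\<^sup>2 \<le> (U n js - \<mu>)\<^sup>2" by (simp add: power2_commute)
    then have "c * (\<mu> / 2)\<^sup>2 \<le> c * (U n js - \<mu>)\<^sup>2" using cpos by (intro mult_left_mono) auto
    moreover have "c * (\<mu> / 2)\<^sup>2 = 1" using mupos by (simp add: c_def power2_eq_square)
    ultimately show ?thesis by simp
  qed
  have sq: "(\<Sum>js\<in>Ls n k. (U n js - \<mu>)\<^sup>2) = (a1 * a1 ^ k + a1 * a2 * a2 ^ k) - 2 * \<mu> * (a1 * a1 ^ k) + \<mu>\<^sup>2 * N ^ k" for k
  proof -
    have "(\<Sum>js\<in>Ls n k. (U n js - \<mu>)\<^sup>2) = (\<Sum>js\<in>Ls n k. (U n js)\<^sup>2) - 2 * \<mu> * (\<Sum>js\<in>Ls n k. U n js) + \<mu>\<^sup>2 * real (card (Ls n k))"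
      by (simp add: power2_diff sum.distrib sum_subtractf sum_distrib_left algebra_simps)
    then show ?thesis unfolding sum_U2[OF n] sum_U card_Ls a1_def a2_def N_def by simp
  qed
  have cnt: "N ^ k - c * ((a1 * a1 ^ k + a1 * a2 * a2 ^ k) - 2 * \<mu> * (a1 * a1 ^ k) + \<mu>\<^sup>2 * N ^ k) \<le> cntA n A k" for k
  proof -
    have "(\<Sum>js\<in>Ls n k. 1 - c * (U n js - \<mu>)\<^sup>2) \<le> cntA n A k"
      unfolding cntA_def by (rule sum_mono) (rule ind)
    moreover have "(\<Sum>js\<in>Ls n k. 1 - c * (U n js - \<mu>)\<^sup>2) = N ^ k - c * (\<Sum>js\<in>Ls n k. (U n js - \<mu>)\<^sup>2)"
      by (simp add: sum_subtractf sum_distrib_left card_Ls N_def)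
    ultimately show ?thesis unfolding sq by simp
  qed
  define W where "W b k = t ^ k / fact k * ((1 / real n) ^ k * b ^ k)" for b k
  define g where "g k = (1 - c * \<mu>\<^sup>2) * W N k - c * a1 * (1 - 2 * \<mu>) * W a1 k - c * a1 * a2 * W a2 k" for k
  define trm where "trm k = t ^ k / fact k * ((1 / real n) ^ k * cntA n A k)" for k
  have gle: "g k \<le> trm k" for k
  proof -
    have "t ^ k / fact k * ((1 / real n) ^ k * (N ^ k - c * ((a1 * a1 ^ k + a1 * a2 * a2 ^ k) - 2 * \<mu> * (a1 * a1 ^ k) + \<mu>\<^sup>2 * N ^ k)))
        \<le> trm k"
      unfolding trm_def using t by (intro mult_left_mono cnt) auto
    moreover have "g k = t ^ k / fact k * ((1 / real n) ^ k * (N ^ k - c * ((a1 * a1 ^ k + a1 * a2 * a2 ^ k) - 2 * \<mu> * (a1 * a1 ^ k) + \<mu>\<^sup>2 * N ^ k)))"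
      unfolding g_def W_def by (simp add: divide_inverse algebra_simps)
    ultimately show ?thesis by simp
  qed
  have WS: "(\<lambda>k. W b k) sums exp (t * b / N)" for b unfolding W_def N_def by (rule ws)
  have gs: "g sums ((1 - c * \<mu>\<^sup>2) * exp (t * N / N) - c * a1 * (1 - 2 * \<mu>) * exp (t * a1 / N) - c * a1 * a2 * exp (t * a2 / N))"
    unfolding g_def by (intro sums_diff sums_mult WS)
  have ts: "trm sums suminf trm"
    unfolding trm_def cntA_def by (rule summable_sums, rule summ; rule normalize_le1[OF n1 ind_sum_ge ind_sum_le])
  have L: "(1 - c * \<mu>\<^sup>2) * exp (t * N / N) - c * a1 * (1 - 2 * \<mu>) * exp (t * a1 / N) - c * a1 * a2 * exp (t * a2 / N) \<le> suminf trm"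
    by (rule sums_le[OF gle gs ts])
  have e0: "exp (- t) * exp (t * N / N) = 1" using Npos by (simp add: exp_minus)
  have e1: "exp (- t) * exp (t * a1 / N) = e"
  proof -
    have "- t + t * a1 / N = - t / N" using Npos by (simp add: a1N field_simps)
    then show ?thesis by (simp add: e_def exp_add[symmetric])
  qed
  have e2: "exp (- t) * exp (t * a2 / N) = e * e"
  proof -
    have "- t + t * a2 / N = - t / N + - t / N" using Npos by (simp add: a2N field_simps)
    then show ?thesis by (simp add: e_def exp_add[symmetric])
  qed
  have "exp (- t) * ((1 - c * \<mu>\<^sup>2) * exp (t * N / N) - c * a1 * (1 - 2 * \<mu>) * exp (t * a1 / N) - c * a1 * a2 * exp (t * a2 / N))
      = (1 - c * \<mu>\<^sup>2) * (exp (- t) * exp (t * N / N)) - c * a1 * (1 - 2 * \<mu>) * (exp (- t) * exp (t * a1 / N)) - c * a1 * a2 * (exp (- t) * exp (t * a2 / N))"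
    by (simp add: algebra_simps)
  also have "\<dots> = 1 - c * \<mu> + c * (\<mu>\<^sup>2 - a1 * a2 * e * e)"
    unfolding e0 e1 e2 mue by (simp add: algebra_simps power2_eq_square)
  finally have eqL: "exp (- t) * ((1 - c * \<mu>\<^sup>2) * exp (t * N / N) - c * a1 * (1 - 2 * \<mu>) * exp (t * a1 / N) - c * a1 * a2 * exp (t * a2 / N))
      = 1 - c * \<mu> + c * (\<mu>\<^sup>2 - a1 * a2 * e * e)" .
  have geL: "1 - c * \<mu> \<le> 1 - c * \<mu> + c * (\<mu>\<^sup>2 - a1 * a2 * e * e)"
  proof -
    have "a1 * a2 * e * e \<le> a1 * a1 * e * e"
      using epos a1N a2N Npos n by (intro mult_right_mono mult_left_mono) (auto simp: a1_def)
    then have "0 \<le> \<mu>\<^sup>2 - a1 * a2 * e * e" by (simp add: mue power2_eq_square algebra_simps)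
    then show ?thesis using cpos by simp
  qed
  have "exp (- t) * ((1 - c * \<mu>\<^sup>2) * exp (t * N / N) - c * a1 * (1 - 2 * \<mu>) * exp (t * a1 / N) - c * a1 * a2 * exp (t * a2 / N)) \<le> exp (- t) * suminf trm"
    using L by (intro mult_left_mono) auto
  then have "1 - c * \<mu> \<le> exp (- t) * suminf trm" using eqL geL by linarith
  moreover have "c * \<mu> = 4 / \<mu>" using mupos by (simp add: c_def power2_eq_square)
  ultimately show ?thesis unfolding A_def[symmetric] heat_set[OF n1 finA] trm_def by simp
qed




lemma card_Sym: "card (Sym n) = fact n"
  unfolding Sym_def by (rule card_permutations) auto

lemma card_fix:
  assumes "j \<in> {1..n}"
  shows "card {\<sigma>\<in>Sym n. \<sigma> j = j} = fact (n - 1)"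
proof -
  have "{\<sigma>\<in>Sym n. \<sigma> j = j} = {\<sigma>. \<sigma> permutes ({1..n} - {j})}"
  proof
    show "{\<sigma>\<in>Sym n. \<sigma> j = j} \<subseteq> {\<sigma>. \<sigma> permutes ({1..n} - {j})}"
      by (auto simp: Sym_def permutes_def)
    show "{\<sigma>. \<sigma> permutes ({1..n} - {j})} \<subseteq> {\<sigma>\<in>Sym n. \<sigma> j = j}"
    proof
      fix \<sigma> assume "\<sigma> \<in> {\<sigma>. \<sigma> permutes ({1..n} - {j})}"
      then have p: "\<sigma> permutes ({1..n} - {j})" by simp
      have "\<sigma> permutes {1..n}" by (rule permutes_subset[OF p]) auto
      moreover have "\<sigma> j = j" by (rule permutes_not_in[OF p]) auto
      ultimately show "\<sigma> \<in> {\<sigma>\<in>Sym n. \<sigma> j = j}" by (simp add: Sym_def)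
    qed
  qed
  moreover have "card ({1..n} - {j}) = n - 1" using assms by simp
  ultimately show ?thesis by (simp add: card_permutations)
qed

lemma unif_set: "A \<subseteq> Sym n \<Longrightarrow> (\<Sum>x\<in>A. unif n x) = real (card A) / fact n"
  by (simp add: unif_def card_Sym subset_iff)

lemma G_nonneg: "0 \<le> G n \<sigma>"
  unfolding G_def by (rule sum_nonneg) auto

lemma sum_G: "(\<Sum>\<sigma>\<in>Sym n. G n \<sigma>) = real (n - 1) * fact (n - 1)"
proof -
  have "(\<Sum>\<sigma>\<in>Sym n. G n \<sigma>) = (\<Sum>j\<in>{2..n}. \<Sum>\<sigma>\<in>Sym n. if \<sigma> j = j then 1 else 0)"
    unfolding G_def by (rule sum.swap)
  also have "\<dots> = (\<Sum>j\<in>{2..n}. (fact (n - 1) :: real))"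
  proof (rule sum.cong[OF refl])
    fix j assume "j \<in> {2..n}"
    then have "j \<in> {1..n}" by auto
    then show "(\<Sum>\<sigma>\<in>Sym n. if \<sigma> j = j then 1 else 0) = (fact (n - 1) :: real)"
      by (simp add: sum_ind card_fix)
  qed
  also have "\<dots> = real (n - 1) * fact (n - 1)" by simp
  finally show ?thesis .
qed

lemma unif_A_le:
  assumes n: "1 \<le> n" and mu: "0 < \<mu>"
  shows "(\<Sum>x\<in>{\<sigma>\<in>Sym n. \<mu> / 2 \<le> G n \<sigma>}. unif n x) \<le> 2 / \<mu>"
proof -
  define A where "A = {\<sigma>\<in>Sym n. \<mu> / 2 \<le> G n \<sigma>}"
  have "\<mu> / 2 * real (card A) = (\<Sum>\<sigma>\<in>A. \<mu> / 2)" by simp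
  also have "\<dots> \<le> (\<Sum>\<sigma>\<in>A. G n \<sigma>)" by (rule sum_mono) (auto simp: A_def)
  also have "\<dots> \<le> (\<Sum>\<sigma>\<in>Sym n. G n \<sigma>)" by (rule sum_mono2) (auto simp: A_def G_nonneg)
  also have "\<dots> = real (n - 1) * fact (n - 1)" by (rule sum_G)
  also have "\<dots> \<le> real n * fact (n - 1)" by (intro mult_right_mono) auto
  also have "\<dots> = fact n" using n by (metis Suc_diff_1 fact_Suc le_less_trans less_one not_le of_nat_fact of_nat_mult) 
  finally have "\<mu> / 2 * real (card A) \<le> fact n" .
  then have "real (card A) / fact n \<le> 2 / \<mu>"
    using mu by (simp add: field_simps)
  then show ?thesis unfolding A_def[symmetric] by (subst unif_set) (auto simp: A_def)
qed




lemma tv_le1: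
  assumes n: "1 \<le> n" and t: "0 \<le> t"
  shows "tv n (heat n (ttr n) t) (unif n) \<le> 1"
  unfolding tv_def
proof (rule cSUP_least)
  show "Pow (Sym n) \<noteq> {}" by auto
  fix B assume B: "B \<in> Pow (Sym n)"
  then have fin: "finite B" by (auto intro: finite_subset)
  have "(\<Sum>x\<in>B. heat n (ttr n) t x) \<le> 1" by (rule heat_le1[OF n fin t])
  moreover have "0 \<le> (\<Sum>x\<in>B. unif n x)" by (rule sum_nonneg) (simp add: unif_def)
  ultimately show "(\<Sum>x\<in>B. heat n (ttr n) t x) - (\<Sum>x\<in>B. unif n x) \<le> 1" by simp
qed

lemma tv_ge:
  assumes "B \<subseteq> Sym n"
  shows "(\<Sum>x\<in>B. p x) - (\<Sum>x\<in>B. unif n x) \<le> tv n p (unif n)"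
  unfolding tv_def
proof (rule cSUP_upper)
  show "B \<in> Pow (Sym n)" using assms by simp
  show "bdd_above ((\<lambda>A. (\<Sum>x\<in>A. p x) - (\<Sum>x\<in>A. unif n x)) ` Pow (Sym n))"
    by (rule bdd_above_finite) simp
qed

lemma d2_ge:
  assumes B: "B \<subseteq> Sym n" and Dv: "1 / 2 \<le> (\<Sum>x\<in>B. p x) - (\<Sum>x\<in>B. unif n x)"
    and uB: "(\<Sum>x\<in>B. unif n x) \<le> 2 / \<mu>" and mu: "0 < \<mu>"
  shows "sqrt (\<mu> / 8) \<le> d2 n p (unif n)"
proof -
  have finB: "finite B" using B finite_Sym finite_subset by blast
  define s where "s = (\<Sum>x\<in>B. (p x - unif n x)\<^sup>2)"
  define m where "m = real (card B)"
  define F where "F = (fact n :: real)"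
  have Fpos: "F > 0" by (simp add: F_def)
  have Bne: "B \<noteq> {}" using Dv by auto
  have mpos: "m > 0" using finB Bne by (simp add: m_def card_gt_0_iff)
  have "(1 / 2)\<^sup>2 \<le> ((\<Sum>x\<in>B. p x) - (\<Sum>x\<in>B. unif n x))\<^sup>2"
    using Dv by (intro power_mono) auto
  also have "\<dots> = (\<Sum>x\<in>B. p x - unif n x)\<^sup>2" by (simp add: sum_subtractf)
  also have "\<dots> \<le> s * m" unfolding s_def m_def by (rule sum_squared_le_sum_of_squares)
  finally have sm: "1 / 4 \<le> s * m" by (simp add: power2_eq_square)
  have "m / F \<le> 2 / \<mu>" using uB unfolding unif_set[OF B] m_def F_def .
  then have mmu: "m * \<mu> \<le> 2 * F" using Fpos mu by (simp add: field_simps)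
  have "\<mu> * m \<le> 8 * F * s * m"
  proof -
    have "8 * F * (1 / 4) \<le> 8 * F * (s * m)" using sm Fpos by (intro mult_left_mono) auto
    then have "2 * F \<le> 8 * F * (s * m)" by simp
    then show ?thesis using mmu by (simp add: algebra_simps)
  qed
  then have "\<mu> \<le> 8 * F * s" using mpos by simp
  then have "\<mu> / 8 \<le> F * s" by simp
  also have "F * s \<le> real (card (Sym n)) * (\<Sum>x\<in>Sym n. \<bar>p x - unif n x\<bar> ^ 2)"
    unfolding F_def s_def card_Sym power2_abs of_nat_fact
    by (intro mult_left_mono sum_mono2) (use B in auto)
  finally show ?thesis unfolding d2_def by (rule real_sqrt_le_mono)
qed

theorem corollary3p3:
  fixes k :: "nat \<Rightarrow> real"
  assumes "\<And>n. k n \<ge> 0"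
    and "filterlim (\<lambda>n. (k n - real n * ln (real n)) / real n) at_bot sequentially"
  shows "filterlim (\<lambda>n. d2 n (heat n (ttr n) (k n)) (unif n)) at_top sequentially
       \<and> (\<lambda>n. tv n (heat n (ttr n) (k n)) (unif n)) \<longlonglongrightarrow> 1"
proof -
  define z where "z n = (k n - real n * ln (real n)) / real n" for n
  define \<mu> where "\<mu> n = real (n - 1) * exp (- k n / real n)" for n
  define A where "A n = {\<sigma>\<in>Sym n. \<mu> n / 2 \<le> G n \<sigma>}" for n
  have ez: "filterlim (\<lambda>n. exp (- z n)) at_top sequentially"
    unfolding z_def
    by (rule filterlim_compose[OF exp_at_top filterlim_compose[OF filterlim_uminus_at_top_at_bot assms(2)]])
  have ez2: "filterlim (\<lambda>n. 1 / 2 * exp (- z n)) at_top sequentially"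
    by (rule filterlim_tendsto_pos_mult_at_top[OF tendsto_const _ ez]) simp
  have "eventually (\<lambda>n. 1 / 2 * exp (- z n) \<le> \<mu> n) sequentially"
    using eventually_ge_at_top[of 2]
  proof eventually_elim
    case (elim n)
    then have npos: "real n > 0" by simp
    have "- z n = ln (real n) + (- k n / real n)"
      using npos by (simp add: z_def field_simps)
    then have "exp (- z n) = real n * exp (- k n / real n)"
      using npos by (simp add: exp_diff exp_minus divide_inverse)
    moreover have "1 / 2 * real n \<le> real (n - 1)" using elim by (simp add: of_nat_diff)
    ultimately show ?case unfolding \<mu>_def
      by (simp add: mult_right_mono)
  qed
  with ez2 have mu_top: "filterlim \<mu> at_top sequentially" by (rule filterlim_at_top_mono)
  have ev: "eventually (\<lambda>n. 2 \<le> n \<and> 12 \<le> \<mu> n) sequentially"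
    using eventually_ge_at_top[of 2] mu_top[unfolded filterlim_at_top, rule_format, of 12]
    by eventually_elim auto
  have key: "1 - 6 / \<mu> n \<le> (\<Sum>x\<in>A n. heat n (ttr n) (k n) x) - (\<Sum>x\<in>A n. unif n x)"
    if "2 \<le> n" "12 \<le> \<mu> n" for n
  proof -
    have "1 - 4 / \<mu> n \<le> (\<Sum>x\<in>A n. heat n (ttr n) (k n) x)"
      unfolding A_def by (rule heat_A_ge[OF that(1) assms(1)]) (simp add: \<mu>_def)
    moreover have "(\<Sum>x\<in>A n. unif n x) \<le> 2 / \<mu> n"
      unfolding A_def by (rule unif_A_le) (use that in auto)
    ultimately show ?thesis by simp
  qed
  have AS: "A n \<subseteq> Sym n" for n by (auto simp: A_def)
  have part1: "filterlim (\<lambda>n. d2 n (heat n (ttr n) (k n)) (unif n)) at_top sequentially"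
  proof (rule filterlim_at_top_mono)
    have "filterlim (\<lambda>n. 1 / 8 * \<mu> n) at_top sequentially"
      by (rule filterlim_tendsto_pos_mult_at_top[OF tendsto_const _ mu_top]) simp
    then show "filterlim (\<lambda>n. sqrt (\<mu> n / 8)) at_top sequentially"
      by (intro filterlim_compose[OF sqrt_at_top]) simp
    show "eventually (\<lambda>n. sqrt (\<mu> n / 8) \<le> d2 n (heat n (ttr n) (k n)) (unif n)) sequentially"
      using ev
    proof eventually_elim
      case (elim n)
      then have mpos: "0 < \<mu> n" by simp
      have "1 / 2 \<le> 1 - 6 / \<mu> n" using elim by (simp add: field_simps)
      also note key[OF elim[THEN conjunct1] elim[THEN conjunct2]]
      finally have D: "1 / 2 \<le> (\<Sum>x\<in>A n. heat n (ttr n) (k n) x) - (\<Sum>x\<in>A n. unif n x)" .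
      have "(\<Sum>x\<in>A n. unif n x) \<le> 2 / \<mu> n"
        unfolding A_def by (rule unif_A_le) (use elim in auto)
      from d2_ge[OF AS D this mpos] show ?case .
    qed
  qed
  have part2: "(\<lambda>n. tv n (heat n (ttr n) (k n)) (unif n)) \<longlonglongrightarrow> 1"
  proof (rule tendsto_sandwich[where f="\<lambda>n. 1 - 6 * inverse (\<mu> n)" and h="\<lambda>n. 1"])
    show "eventually (\<lambda>n. 1 - 6 * inverse (\<mu> n) \<le> tv n (heat n (ttr n) (k n)) (unif n)) sequentially"
      using ev
    proof eventually_elim
      case (elim n)
      have "1 - 6 * inverse (\<mu> n) = 1 - 6 / \<mu> n" by (simp add: divide_inverse)
      also note key[OF elim[THEN conjunct1] elim[THEN conjunct2]]
      also have "(\<Sum>x\<in>A n. heat n (ttr n) (k n) x) - (\<Sum>x\<in>A n. unif n x) \<le> tv n (heat n (ttr n) (k n)) (unif n)"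
        by (rule tv_ge[OF AS])
      finally show ?case .
    qed
    show "eventually (\<lambda>n. tv n (heat n (ttr n) (k n)) (unif n) \<le> 1) sequentially"
      using eventually_ge_at_top[of 1]
      by eventually_elim (rule tv_le1[OF _ assms(1)])
    show "(\<lambda>n. 1) \<longlonglongrightarrow> (1::real)" by simp
    have "(\<lambda>n. 1 - 6 * inverse (\<mu> n)) \<longlonglongrightarrow> 1 - 6 * 0"
      by (intro tendsto_intros tendsto_inverse_0_at_top mu_top)
    then show "(\<lambda>n. 1 - 6 * inverse (\<mu> n)) \<longlonglongrightarrow> 1" by simp
  qed
  from part1 part2 show ?thesis by blast
qed


end
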